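(* $\ker\Lambda$ is the smallest ideal of $\mathcal H_{CK}$ which is stable under $B_+$ and contains $a\bowtie b-ab$ for all nonempty rooted trees $a,b$.
   Context: Let $k$ be a field of characteristic $0$. $\mathcal H_{CK}$ is the free commutative $k$-algebra on isomorphism classes of nonempty (non-planar, finite) rooted trees, i.e. rooted forests with unit the empty forest $\mathbf 1$; $B_+:\mathcal H_{CK}\to\mathcal H_{CK}$ is the linear map sending a forest $t_1\cdots t_n$ to the tree obtained by joining the roots of $t_1,\dots,t_n$ to a new root ($B_+(\mathbf 1)=\bullet$, the one-vertex tree). $\mathcal A=k[x]$ carries the quasi-shuffle product $\diamond$ determined by $\mathbf 1\diamond u=u\diamond\mathbf 1=u$ and $x^k\diamond x^l=(x^{k-1}\diamond x^l)x+(x^k\diamond x^{l-1})x+(x^{k-1}\diamond x^{l-1})x$ for $k,l\ge1$. $\Lambda:\mathcal H_{CK}\to(\mathcal A,\diamond)$ is the unique unital algebra morphism with $\Lambda(B_+(t_1\cdots t_n))=(\Lambda(t_1)\diamond\cdots\diamond\Lambda(t_n))x$. For trees $a=B_+(a_1\cdots a_n)$, $b=B_+(b_1\cdots b_p)$: $a\circ b=B_+(a_1\cdots a_nb)$, $a\times b=B_+(a_1\cdots a_nb_1\cdots b_p)$, $a\bowtie b=a\circ b+b\circ a+a\times b$; $ab$ is the product (forest) in $\mathcal H_{CK}$. *)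

theory Defs
  imports "HOL-Library.Multiset" "HOL-Library.Poly_Mapping" "HOL-Computational_Algebra.Polynomial"
begin

text \<open>Non-planar finite rooted trees: a root together with a multiset of subtrees.
  Forests are multisets of trees; the empty forest is the unit.\<close>
datatype rtree = Node "rtree multiset"

text \<open>Connes--Kreimer algebra: free commutative k-algebra on trees, i.e. finitely
  supported k-linear combinations of forests (monomials), with the convolution product.\<close>
type_synonym 'k hck = "rtree multiset \<Rightarrow>\<^sub>0 'k"

definition forest :: "rtree multiset \<Rightarrow> 'k::comm_ring_1 hck" where
  "forest F = Poly_Mapping.single F 1"

definition tree :: "rtree \<Rightarrow> 'k::comm_ring_1 hck" where
  "tree t = forest {#t#}"

definition scal :: "'k \<Rightarrow> 'k::comm_ring_1 hck" where
  "scal c = Poly_Mapping.single {#} c"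

definition Bplus :: "'k::comm_ring_1 hck \<Rightarrow> 'k hck" where
  "Bplus h = (\<Sum>F\<in>Poly_Mapping.keys h. Poly_Mapping.single {#Node F#} (Poly_Mapping.lookup h F))"

fun tcirc :: "rtree \<Rightarrow> rtree \<Rightarrow> rtree" where
  "tcirc (Node A) b = Node (A + {#b#})"

fun ttimes :: "rtree \<Rightarrow> rtree \<Rightarrow> rtree" where
  "ttimes (Node A) (Node B) = Node (A + B)"

definition bowtie :: "rtree \<Rightarrow> rtree \<Rightarrow> 'k::comm_ring_1 hck" where
  "bowtie a b = tree (tcirc a b) + tree (tcirc b a) + tree (ttimes a b)"

fun qsh_mon :: "nat \<Rightarrow> nat \<Rightarrow> 'k::comm_ring_1 poly" where
  "qsh_mon 0 l = monom 1 l"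
| "qsh_mon k 0 = monom 1 k"
| "qsh_mon (Suc k) (Suc l) =
     (qsh_mon k (Suc l) + qsh_mon (Suc k) l + qsh_mon k l) * [:0, 1:]"

definition qsh :: "'k::comm_ring_1 poly \<Rightarrow> 'k poly \<Rightarrow> 'k poly" (infixl "\<diamondop>" 70) where
  "p \<diamondop> q = (\<Sum>i\<le>degree p. \<Sum>j\<le>degree q. smult (coeff p i * coeff q j) (qsh_mon i j))"

text \<open>Lambda: unital k-algebra morphism H_CK \<rightarrow> (k[x], quasi-shuffle) with
  Lambda(B_+(t_1...t_n)) = (Lambda(t_1) \<diamond> ... \<diamond> Lambda(t_n)) x.
  Since Lambda is multiplicative, Lambda(t_1...t_n) = Lambda(t_1) \<diamond> ... \<diamond> Lambda(t_n),
  so the recursion is Lambda(B_+(F)) = Lambda(F) * x for every forest F.\<close>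
definition is_Lambda :: "('k::field_char_0 hck \<Rightarrow> 'k poly) \<Rightarrow> bool" where
  "is_Lambda L \<longleftrightarrow>
     (\<forall>h g. L (h + g) = L h + L g) \<and>
     (\<forall>c h. L (scal c * h) = smult c (L h)) \<and>
     L 1 = 1 \<and>
     (\<forall>h g. L (h * g) = L h \<diamondop> L g) \<and>
     (\<forall>F. L (Bplus (forest F)) = L (forest F) * [:0, 1:])"

definition is_ideal :: "'k::comm_ring_1 hck set \<Rightarrow> bool" where
  "is_ideal I \<longleftrightarrow> 0 \<in> I \<and> (\<forall>x\<in>I. \<forall>y\<in>I. x + y \<in> I) \<and> (\<forall>r. \<forall>x\<in>I. r * x \<in> I)"

end

theory Submission imports Defs begin

lemma qsh_bound:
  assumes "degree p \<le> m" "degree q \<le> n"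
  shows "p \<diamondop> q = (\<Sum>i\<le>m. \<Sum>j\<le>n. smult (coeff p i * coeff q j) (qsh_mon i j))"
proof -
  have "p \<diamondop> q = (\<Sum>i\<le>degree p. \<Sum>j\<le>n. smult (coeff p i * coeff q j) (qsh_mon i j))"
    unfolding qsh_def
    by (intro sum.cong refl sum.mono_neutral_left) (use assms in \<open>auto simp: coeff_eq_0\<close>)
  also have "\<dots> = (\<Sum>i\<le>m. \<Sum>j\<le>n. smult (coeff p i * coeff q j) (qsh_mon i j))"
    by (intro sum.mono_neutral_left) (use assms in \<open>auto simp: coeff_eq_0\<close>)
  finally show ?thesis .
qed

lemma qsh_zero_right: "p \<diamondop> 0 = 0"
  by (simp add: qsh_def)

lemma timesX: "(p::'a::comm_ring_1 poly) * [:0, 1:] = pCons 0 p" by (simp add: smult_1_left)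

lemma deg_pCons0: "degree (pCons 0 p) \<le> Suc (degree p)"
  by (simp add: degree_pCons_le)

lemma pCons0_sum: "pCons 0 (sum f A) = (\<Sum>x\<in>A. pCons 0 (f x :: 'a::comm_ring_1 poly))"
  by (induct A rule: infinite_finite_induct) (simp_all, metis add_0_left add_pCons)

lemma qsh_key:
  "(p * [:0,1:]) \<diamondop> (q * [:0,1:]) =
     (p \<diamondop> (q * [:0,1:]) + (p * [:0,1:]) \<diamondop> q + p \<diamondop> q) * [:0,1:]"
proof -
  define m where "m = degree p"
  define n where "n = degree q"
  have dp: "degree (pCons 0 p) \<le> Suc m" and dq: "degree (pCons 0 q) \<le> Suc n"
    using deg_pCons0 m_def n_def by auto
  have L: "(p * [:0,1:]) \<diamondop> (q * [:0,1:]) =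
     (\<Sum>i\<le>m. \<Sum>j\<le>n. smult (coeff p i * coeff q j) (qsh_mon (Suc i) (Suc j)))"
    unfolding timesX
    by (subst qsh_bound[OF dp dq]) (simp only: sum.atMost_Suc_shift coeff_pCons_0 coeff_pCons_Suc mult_zero_left mult_zero_right smult_0_left sum.neutral_const add_0_left)
  have R1: "p \<diamondop> (q * [:0,1:]) =
     (\<Sum>i\<le>m. \<Sum>j\<le>n. smult (coeff p i * coeff q j) (qsh_mon i (Suc j)))"
    unfolding timesX
    by (subst qsh_bound[OF _ dq]) (simp_all only: m_def order_refl sum.atMost_Suc_shift coeff_pCons_0 coeff_pCons_Suc mult_zero_left mult_zero_right smult_0_left sum.neutral_const add_0_left)
  have R2: "(p * [:0,1:]) \<diamondop> q =
     (\<Sum>i\<le>m. \<Sum>j\<le>n. smult (coeff p i * coeff q j) (qsh_mon (Suc i) j))"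
    unfolding timesX
    by (subst qsh_bound[OF dp]) (simp_all only: n_def order_refl sum.atMost_Suc_shift coeff_pCons_0 coeff_pCons_Suc mult_zero_left mult_zero_right smult_0_left sum.neutral_const add_0_left)
  have R3: "p \<diamondop> q =
     (\<Sum>i\<le>m. \<Sum>j\<le>n. smult (coeff p i * coeff q j) (qsh_mon i j))"
    by (rule qsh_bound) (simp_all add: m_def n_def)
  have "(\<Sum>i\<le>m. \<Sum>j\<le>n. smult (coeff p i * coeff q j) (qsh_mon i (Suc j)))
      + (\<Sum>i\<le>m. \<Sum>j\<le>n. smult (coeff p i * coeff q j) (qsh_mon (Suc i) j))
      + (\<Sum>i\<le>m. \<Sum>j\<le>n. smult (coeff p i * coeff q j) (qsh_mon i j))
      = (\<Sum>i\<le>m. \<Sum>j\<le>n. smult (coeff p i * coeff q j)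
            (qsh_mon i (Suc j) + qsh_mon (Suc i) j + qsh_mon i j))"
    by (simp only: sum.distrib[symmetric] smult_add_right)
  then show ?thesis
    unfolding L R1 R2 R3 qsh_mon.simps(3)
    by (simp only: sum_distrib_right mult_smult_left)
qed


lemma forest_mult: "forest F * forest G = (forest (F+G) :: 'k::comm_ring_1 hck)"
  by (simp add: forest_def mult_single)

lemma forest_empty: "(forest {#} :: 'k::comm_ring_1 hck) = 1"
  by (simp add: forest_def)

lemma scal_forest: "scal c * forest F = (Poly_Mapping.single F c :: 'k::comm_ring_1 hck)"
  by (simp add: scal_def forest_def mult_single)

lemma lookup_scal: "Poly_Mapping.lookup (scal c * (h::'k::comm_ring_1 hck)) F = c * Poly_Mapping.lookup h F"
  unfolding scal_def mult_map_scale_conv_mult[symmetric]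
  by (simp add: map.rep_eq when_def)

lemma keys_scal: "Poly_Mapping.keys (scal c * (h::'k::comm_ring_1 hck)) \<subseteq> Poly_Mapping.keys h"
  by (auto simp: in_keys_iff lookup_scal)

lemma keys_forest: "Poly_Mapping.keys (forest F :: 'k::{comm_ring_1} hck) \<subseteq> {F}"
  by (simp add: forest_def)

lemma decomp: "(h::'k::comm_ring_1 hck) = (\<Sum>F\<in>Poly_Mapping.keys h. scal (Poly_Mapping.lookup h F) * forest F)"
proof (rule poly_mapping_eqI)
  fix k
  show "Poly_Mapping.lookup h k =
    Poly_Mapping.lookup (\<Sum>F\<in>Poly_Mapping.keys h. scal (Poly_Mapping.lookup h F) * forest F) k"
    by (simp add: scal_forest lookup_sum lookup_single when_def in_keys_iff)
qed

lemma Bplus_forest: "Bplus (forest F) = (tree (Node F) :: 'k::comm_ring_1 hck)"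
  by (simp add: Bplus_def forest_def tree_def)

lemma Bplus_expand: "Bplus (h::'k::comm_ring_1 hck) =
   (\<Sum>F\<in>Poly_Mapping.keys h. scal (Poly_Mapping.lookup h F) * tree (Node F))"
  by (simp add: Bplus_def scal_forest tree_def)

lemma lookup_Bplus: "Poly_Mapping.lookup (Bplus (h::'k::comm_ring_1 hck)) G =
   (\<Sum>F\<in>Poly_Mapping.keys h. if G = {#Node F#} then Poly_Mapping.lookup h F else 0)"
  by (simp add: Bplus_def lookup_sum lookup_single when_def eq_commute)

lemma lookup_Bplus_node: "Poly_Mapping.lookup (Bplus (h::'k::comm_ring_1 hck)) {#Node F#} = Poly_Mapping.lookup h F"
  by (simp add: lookup_Bplus in_keys_iff)

lemma lookup_Bplus_other: "(\<forall>F. G \<noteq> {#Node F#}) \<Longrightarrow> Poly_Mapping.lookup (Bplus (h::'k::comm_ring_1 hck)) G = 0"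
  by (simp add: lookup_Bplus)

lemma Bplus_add: "Bplus ((h::'k::comm_ring_1 hck) + g) = Bplus h + Bplus g"
proof (rule poly_mapping_eqI)
  fix k
  show "Poly_Mapping.lookup (Bplus (h + g)) k = Poly_Mapping.lookup (Bplus h + Bplus g) k"
  proof (cases "\<exists>F. k = {#Node F#}")
    case True
    then obtain F where "k = {#Node F#}" by blast
    then show ?thesis by (simp add: lookup_Bplus_node lookup_add)
  next
    case False
    then show ?thesis by (simp add: lookup_Bplus_other lookup_add)
  qed
qed

lemma keys_Bplus: "Poly_Mapping.keys (Bplus (h::'k::comm_ring_1 hck)) \<subseteq> (\<lambda>F. {#Node F#}) ` Poly_Mapping.keys h"
proof
  fix G assume G: "G \<in> Poly_Mapping.keys (Bplus h)"
  show "G \<in> (\<lambda>F. {#Node F#}) ` Poly_Mapping.keys h"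
  proof (cases "\<exists>F. G = {#Node F#}")
    case True
    then obtain F where "G = {#Node F#}" by blast
    with G show ?thesis by (auto simp: in_keys_iff lookup_Bplus_node)
  next
    case False
    with G show ?thesis by (auto simp: in_keys_iff lookup_Bplus_other)
  qed
qed

fun ladF :: "nat \<Rightarrow> rtree multiset" where
  "ladF 0 = {#}"
| "ladF (Suc n) = {#Node (ladF n)#}"

lemma ladF_inj: "ladF i = ladF j \<longleftrightarrow> i = j"
proof (induction i arbitrary: j)
  case 0 then show ?case by (cases j) auto
next
  case (Suc i) then show ?case by (cases j) auto
qed

context
  fixes L :: "'k::field_char_0 hck \<Rightarrow> 'k poly"
  assumes LL: "is_Lambda L"
begin

lemma L_add: "L (h + g) = L h + L g" using LL unfolding is_Lambda_def by blast
lemma L_scal: "L (scal c * h) = smult c (L h)" using LL unfolding is_Lambda_def by blast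
lemma L_one: "L 1 = 1" using LL unfolding is_Lambda_def by blast
lemma L_mult: "L (h * g) = L h \<diamondop> L g" using LL unfolding is_Lambda_def by blast
lemma L_tree: "L (tree (Node F)) = L (forest F) * [:0, 1:]"
  using LL by (simp add: is_Lambda_def Bplus_forest[symmetric])

lemma L_zero: "L 0 = 0"
  using L_add[of 0 0] by simp

lemma L_diff: "L (h - g) = L h - L g"
  using L_add[of "h - g" g] by simp

lemma L_sum: "L (sum f A) = (\<Sum>x\<in>A. L (f x))"
  by (induct A rule: infinite_finite_induct) (simp_all add: L_zero L_add)

lemma L_Bplus: "L (Bplus h) = L h * [:0, 1:]"
proof -
  have "L (Bplus h) = (\<Sum>F\<in>Poly_Mapping.keys h. smult (Poly_Mapping.lookup h F) (L (forest F) * [:0, 1:]))"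
    by (simp add: Bplus_expand L_sum L_scal L_tree)
  also have "\<dots> = (\<Sum>F\<in>Poly_Mapping.keys h. smult (Poly_Mapping.lookup h F) (L (forest F))) * [:0, 1:]"
    by (simp add: sum_distrib_right mult_smult_left del: mult_pCons_right)
  also have "(\<Sum>F\<in>Poly_Mapping.keys h. smult (Poly_Mapping.lookup h F) (L (forest F))) = L h"
    by (subst (2) decomp) (simp add: L_sum L_scal)
  finally show ?thesis .
qed

lemma L_bowtie: "L (bowtie a b) = L (tree a * tree b)"
proof -
  obtain A where a: "a = Node A" by (cases a) auto
  obtain B where b: "b = Node B" by (cases b) auto
  define p where "p = L (forest A)"
  define q where "q = L (forest B)"
  have ta: "L (tree a) = p * [:0,1:]" by (simp add: a p_def L_tree del: mult_pCons_right)
  have tb: "L (tree b) = q * [:0,1:]" by (simp add: b q_def L_tree del: mult_pCons_right)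
  have 1: "L (tree (tcirc a b)) = (p \<diamondop> (q * [:0,1:])) * [:0,1:]"
  proof -
    have e: "forest (A + {#b#}) = forest A * tree b" by (simp add: tree_def forest_mult)
    have "L (tree (tcirc a b)) = L (forest A * tree b) * [:0,1:]"
      by (simp only: a tcirc.simps L_tree e)
    then show ?thesis by (simp only: L_mult tb p_def)
  qed
  have 2: "L (tree (tcirc b a)) = ((p * [:0,1:]) \<diamondop> q) * [:0,1:]"
  proof -
    have e: "forest (B + {#a#}) = tree a * forest B" by (simp add: tree_def forest_mult add.commute)
    have "L (tree (tcirc b a)) = L (tree a * forest B) * [:0,1:]"
      by (simp only: b tcirc.simps L_tree e)
    then show ?thesis by (simp only: L_mult ta q_def)
  qed
  have 3: "L (tree (ttimes a b)) = (p \<diamondop> q) * [:0,1:]"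
    by (simp add: a b L_tree L_mult p_def q_def forest_mult[symmetric] del: mult_pCons_right)
  show ?thesis
    unfolding bowtie_def L_add 1 2 3 L_mult ta tb qsh_key
    by (simp only: distrib_right)
qed

lemma L_lad: "L (forest (ladF n)) = monom 1 n"
proof (induction n)
  case 0 then show ?case by (simp add: forest_empty L_one)
next
  case (Suc n)
  have e: "forest (ladF (Suc n)) = tree (Node (ladF n))" by (simp add: tree_def)
  have "L (forest (ladF (Suc n))) = monom 1 n * [:0,1:]" by (simp only: e L_tree Suc.IH)
  then show ?case by (simp only: timesX monom_Suc)
qed

lemma L_inj_S:
  assumes "Poly_Mapping.keys g \<subseteq> range ladF" "L g = 0"
  shows "g = 0"
proof (rule ccontr)
  assume "g \<noteq> 0"
  then obtain F0 where F0: "F0 \<in> Poly_Mapping.keys g"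
    by (metis all_not_in_conv keys_eq_empty)
  then obtain k where k: "F0 = ladF k" using assms(1) by blast
  have Lg: "L g = (\<Sum>F\<in>Poly_Mapping.keys g. smult (Poly_Mapping.lookup g F) (L (forest F)))"
    by (subst decomp) (simp add: L_sum L_scal)
  have "coeff (L g) k = (\<Sum>F\<in>Poly_Mapping.keys g. Poly_Mapping.lookup g F * coeff (L (forest F)) k)"
    unfolding Lg by (simp add: coeff_sum)
  also have "\<dots> = (\<Sum>F\<in>Poly_Mapping.keys g. if F = F0 then Poly_Mapping.lookup g F else 0)"
  proof (rule sum.cong[OF refl])
    fix F assume "F \<in> Poly_Mapping.keys g"
    then obtain j where j: "F = ladF j" using assms(1) by blast
    show "Poly_Mapping.lookup g F * coeff (L (forest F)) k = (if F = F0 then Poly_Mapping.lookup g F else 0)"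
      by (simp add: j k L_lad coeff_monom ladF_inj)
  qed
  also have "\<dots> = Poly_Mapping.lookup g F0" using F0 by simp
  finally show False using assms(2) F0 by (simp add: in_keys_iff)
qed

end


section \<open>Reduction modulo an admissible ideal\<close>

definition fam :: "'k::comm_ring_1 hck set \<Rightarrow> bool" where
  "fam I \<longleftrightarrow> is_ideal I \<and> Bplus ` I \<subseteq> I \<and> (\<forall>a b. bowtie a b - tree a * tree b \<in> I)"

definition inT :: "'k::comm_ring_1 hck set \<Rightarrow> 'k hck \<Rightarrow> bool" where
  "inT I h \<longleftrightarrow> (\<exists>g. Poly_Mapping.keys g \<subseteq> range ladF \<and> h - g \<in> I)"

context
  fixes I :: "'k::comm_ring_1 hck set"
  assumes fI: "fam I"
begin

lemma I0: "0 \<in> I" using fI unfolding fam_def is_ideal_def by blast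
lemma Iadd: "x \<in> I \<Longrightarrow> y \<in> I \<Longrightarrow> x + y \<in> I" using fI unfolding fam_def is_ideal_def by blast
lemma Imult: "x \<in> I \<Longrightarrow> r * x \<in> I" using fI unfolding fam_def is_ideal_def by blast
lemma IBplus: "x \<in> I \<Longrightarrow> Bplus x \<in> I" using fI unfolding fam_def by blast
lemma Ibow: "bowtie a b - tree a * tree b \<in> I" using fI unfolding fam_def by blast
lemma Ineg: "x \<in> I \<Longrightarrow> - x \<in> I" using Imult[of x "-1"] by simp
lemma Idiff: "x \<in> I \<Longrightarrow> y \<in> I \<Longrightarrow> x - y \<in> I"
  using Iadd[OF _ Ineg[of y], of x] by (simp only: diff_conv_add_uminus)

lemma inT_S: "Poly_Mapping.keys g \<subseteq> range ladF \<Longrightarrow> inT I g"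
  unfolding inT_def using I0 by (intro exI[of _ g]) simp

lemma inT_lad: "inT I (forest (ladF i))"
  by (rule inT_S) (use keys_forest in blast)

lemma inT_add: assumes "inT I h" "inT I h'" shows "inT I (h + h')"
proof -
  obtain g where g: "Poly_Mapping.keys g \<subseteq> range ladF" "h - g \<in> I"
    using assms(1) unfolding inT_def by auto
  obtain g' where g': "Poly_Mapping.keys g' \<subseteq> range ladF" "h' - g' \<in> I"
    using assms(2) unfolding inT_def by auto
  have "Poly_Mapping.keys (g + g') \<subseteq> range ladF" by (rule order_trans[OF keys_add Un_least[OF g(1) g'(1)]])
  moreover have "(h + h') - (g + g') \<in> I" using Iadd[OF g(2) g'(2)] by (simp only: add_diff_add)
  ultimately show ?thesis unfolding inT_def by (intro exI[of _ "g + g'"] conjI)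
qed

lemma inT_scal: assumes "inT I h" shows "inT I (scal c * h)"
proof -
  obtain g where g: "Poly_Mapping.keys g \<subseteq> range ladF" "h - g \<in> I"
    using assms unfolding inT_def by auto
  have "Poly_Mapping.keys (scal c * g) \<subseteq> range ladF" by (rule order_trans[OF keys_scal g(1)])
  moreover have "scal c * h - scal c * g \<in> I" using Imult[OF g(2), of "scal c"] by (simp only: right_diff_distrib)
  ultimately show ?thesis unfolding inT_def by (intro exI[of _ "scal c * g"] conjI)
qed

lemma inT_zero: "inT I 0" by (rule inT_S) simp

lemma inT_sum: "(\<And>x. x \<in> A \<Longrightarrow> inT I (f x)) \<Longrightarrow> inT I (sum f A)"
  by (induct A rule: infinite_finite_induct) (simp_all add: inT_zero inT_add)

lemma inT_plusI: assumes "inT I h" "x \<in> I" shows "inT I (h - x)"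
proof -
  obtain g where g: "Poly_Mapping.keys g \<subseteq> range ladF" "h - g \<in> I"
    using assms unfolding inT_def by auto
  have eq: "(h - x) - g = (h - g) - x" by (simp add: algebra_simps)
  have "(h - x) - g \<in> I" unfolding eq by (rule Idiff[OF g(2) assms(2)])
  then show ?thesis using g(1) unfolding inT_def by (intro exI[of _ g] conjI)
qed

lemma inT_Bplus: assumes "inT I h" shows "inT I (Bplus h)"
proof -
  obtain g where g: "Poly_Mapping.keys g \<subseteq> range ladF" "h - g \<in> I"
    using assms unfolding inT_def by auto
  have "Poly_Mapping.keys (Bplus g) \<subseteq> range ladF"
  proof
    fix G assume "G \<in> Poly_Mapping.keys (Bplus g)"
    then obtain F where "F \<in> Poly_Mapping.keys g" "G = {#Node F#}" using keys_Bplus by blast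
    then obtain i where "G = {#Node (ladF i)#}" using g(1) by blast
    then have "G = ladF (Suc i)" by simp
    then show "G \<in> range ladF" by blast
  qed
  moreover have "Bplus h - Bplus g = Bplus (h - g)"
    using Bplus_add[of "h - g" g] by simp
  then have "Bplus h - Bplus g \<in> I" using IBplus[OF g(2)] by simp
  ultimately show ?thesis unfolding inT_def by (intro exI[of _ "Bplus g"] conjI)
qed

lemma inT_lad_mult: "inT I (forest (ladF i) * forest (ladF j))"
proof -
  have "\<forall>i j. i + j = N \<longrightarrow> inT I (forest (ladF i) * forest (ladF j))" for N
  proof (induction N rule: less_induct)
    case (less N)
    show ?case
    proof (intro allI impI)
      fix i j assume ij: "i + j = N"
      show "inT I (forest (ladF i) * forest (ladF j))"
      proof (cases i)
        case 0 then show ?thesis by (simp add: forest_empty inT_lad)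
      next
        case (Suc i')
        show ?thesis
        proof (cases j)
          case 0 then show ?thesis by (simp add: forest_empty inT_lad)
        next
          case (Suc j')
          define a where "a = Node (ladF i')"
          define b where "b = Node (ladF j')"
          have fa: "forest (ladF i) = tree a" using \<open>i = Suc i'\<close> by (simp add: a_def tree_def)
          have fb: "forest (ladF j) = tree b" using Suc by (simp add: b_def tree_def)
          have la: "ladF i = {#a#}" using \<open>i = Suc i'\<close> by (simp add: a_def)
          have lb: "ladF j = {#b#}" using Suc by (simp add: b_def)
          have e1: "tree (tcirc a b) = Bplus (forest (ladF i') * forest (ladF j))"
            by (simp add: a_def lb Bplus_forest forest_mult)
          have e2: "tree (tcirc b a) = Bplus (forest (ladF j') * forest (ladF i))"
            by (simp add: b_def la Bplus_forest forest_mult)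
          have e3: "tree (ttimes a b) = Bplus (forest (ladF i') * forest (ladF j'))"
            by (simp add: a_def b_def Bplus_forest forest_mult)
          have h1: "inT I (forest (ladF i') * forest (ladF j))"
            by (rule less.IH[of "i'+j", rule_format]) (use ij Suc \<open>i = Suc i'\<close> in auto)
          have h2: "inT I (forest (ladF j') * forest (ladF i))"
            by (rule less.IH[of "j'+i", rule_format]) (use ij Suc \<open>i = Suc i'\<close> in auto)
          have h3: "inT I (forest (ladF i') * forest (ladF j'))"
            by (rule less.IH[of "i'+j'", rule_format]) (use ij Suc \<open>i = Suc i'\<close> in auto)
          have "inT I (bowtie a b)"
            unfolding bowtie_def e1 e2 e3
            using h1 h2 h3 by (intro inT_add inT_Bplus)
          then have "inT I (bowtie a b - (bowtie a b - tree a * tree b))"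
            by (rule inT_plusI[OF _ Ibow])
          moreover have "bowtie a b - (bowtie a b - tree a * tree b) = tree a * tree b"
            by (simp only: diff_diff_eq2 add_diff_cancel_left')
          moreover have "forest (ladF i) * forest (ladF j) = tree a * tree b"
            by (simp only: fa fb)
          ultimately show ?thesis by metis
        qed
      qed
    qed
  qed
  then show ?thesis by (rule allE[of _ i], rule allE[of _ j]) auto
qed

lemma inT_mult: assumes "inT I h" "inT I h'" shows "inT I (h * h')"
proof -
  obtain s where s: "Poly_Mapping.keys s \<subseteq> range ladF" "h - s \<in> I"
    using assms(1) unfolding inT_def by auto
  obtain t where t: "Poly_Mapping.keys t \<subseteq> range ladF" "h' - t \<in> I"
    using assms(2) unfolding inT_def by auto
  have st: "inT I (s * t)"
  proof -
    have "s * t = (\<Sum>F\<in>Poly_Mapping.keys s. \<Sum>G\<in>Poly_Mapping.keys t.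
        (scal (Poly_Mapping.lookup s F) * forest F) * (scal (Poly_Mapping.lookup t G) * forest G))"
      by (subst decomp[of s], subst decomp[of t]) (rule sum_product)
    also have "inT I \<dots>"
    proof (intro inT_sum)
      fix F G assume "F \<in> Poly_Mapping.keys s" "G \<in> Poly_Mapping.keys t"
      then obtain i j where ij: "F = ladF i" "G = ladF j" using s(1) t(1) by blast
      have "(scal (Poly_Mapping.lookup s F) * forest F) * (scal (Poly_Mapping.lookup t G) * forest G)
          = scal (Poly_Mapping.lookup s F) * (scal (Poly_Mapping.lookup t G) * (forest F * forest G))"
        by (simp only: mult.assoc mult.left_commute)
      moreover have "inT I (scal (Poly_Mapping.lookup s F) * (scal (Poly_Mapping.lookup t G) * (forest F * forest G)))"
        unfolding ij by (intro inT_scal inT_lad_mult)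
      ultimately show "inT I ((scal (Poly_Mapping.lookup s F) * forest F) * (scal (Poly_Mapping.lookup t G) * forest G))"
        by metis
    qed
    finally show ?thesis .
  qed
  have "h * h' - s * t = s * (h' - t) + h' * (h - s)" by (simp add: algebra_simps)
  then have "h * h' - s * t \<in> I" using Iadd[OF Imult[OF t(2)] Imult[OF s(2)]] by simp
  then have "inT I (s * t - (- (h * h' - s * t)))"
    by (rule inT_plusI[OF st Ineg])
  then show ?thesis by simp
qed

lemma inT_forest_of_trees: "(\<forall>t\<in>#F. inT I (tree t)) \<Longrightarrow> inT I (forest F)"
proof (induction F)
  case empty
  then show ?case using inT_lad[of 0] by simp
next
  case (add t F)
  have e: "forest (add_mset t F) = tree t * forest F" by (simp add: tree_def forest_mult)
  have "inT I (tree t)" "inT I (forest F)" using add by auto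
  then show ?case unfolding e by (rule inT_mult)
qed

lemma inT_tree: "inT I (tree t)"
proof (induction t)
  case (Node F)
  then have "inT I (forest F)" by (intro inT_forest_of_trees) auto
  then show ?case using inT_Bplus Bplus_forest by metis
qed

lemma inT_all: "inT I h"
  by (subst decomp) (intro inT_sum inT_scal inT_forest_of_trees ballI inT_tree)

end

lemma fam_Int: "fam I \<Longrightarrow> fam J \<Longrightarrow> fam (I \<inter> J)"
  by (auto simp: fam_def is_ideal_def)

lemma fam_ker:
  fixes L :: "'k::field_char_0 hck \<Rightarrow> 'k poly"
  assumes LL: "is_Lambda L"
  shows "fam {h. L h = 0}"
proof -
  have "is_ideal {h. L h = 0}"
    unfolding is_ideal_def
    by (simp add: L_zero[OF LL] L_add[OF LL] L_mult[OF LL] qsh_zero_right)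
  moreover have "Bplus ` {h. L h = 0} \<subseteq> {h. L h = 0}"
    by (auto simp: L_Bplus[OF LL])
  moreover have "\<forall>a b. bowtie a b - tree a * tree b \<in> {h. L h = 0}"
    by (simp add: L_diff[OF LL] L_bowtie[OF LL])
  ultimately show ?thesis unfolding fam_def by (intro conjI)
qed

theorem mainTheorem14:
  fixes L :: "'k::field_char_0 hck \<Rightarrow> 'k poly"
  assumes "is_Lambda L"
  shows "{h. L h = 0} =
    \<Inter> {I. is_ideal I \<and> Bplus ` I \<subseteq> I \<and>
           (\<forall>a b. bowtie a b - tree a * tree b \<in> I)}"
proof
  show "\<Inter> {I. is_ideal I \<and> Bplus ` I \<subseteq> I \<and> (\<forall>a b. bowtie a b - tree a * tree b \<in> I)}
      \<subseteq> {h. L h = 0}"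
    using fam_ker[OF assms] unfolding fam_def by (intro Inter_lower CollectI)
next
  show "{h. L h = 0} \<subseteq> \<Inter> {I. is_ideal I \<and> Bplus ` I \<subseteq> I \<and> (\<forall>a b. bowtie a b - tree a * tree b \<in> I)}"
  proof (intro subsetI InterI)
    fix h and I :: "'k hck set" assume h: "h \<in> {h. L h = 0}"
      and I: "I \<in> {I. is_ideal I \<and> Bplus ` I \<subseteq> I \<and> (\<forall>a b. bowtie a b - tree a * tree b \<in> I)}"
    define I' where "I' = I \<inter> {h. L h = 0}"
    have "fam I" using I unfolding fam_def by (rule CollectD)
    then have fI': "fam I'" unfolding I'_def by (rule fam_Int[OF _ fam_ker[OF assms]])
    obtain g where g: "Poly_Mapping.keys g \<subseteq> range ladF" "h - g \<in> I'"
      using inT_all[OF fI', of h] unfolding inT_def by blast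
    have "L (h - g) = 0" using g(2) unfolding I'_def by blast
    then have "L g = 0" using h L_diff[OF assms, of h g] by simp
    then have "g = 0" using L_inj_S[OF assms g(1)] by simp
    then show "h \<in> I" using g(2) unfolding I'_def by simp
  qed
qed

end
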